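(* The closed-loop SMP system $x_{t+1}=(A_t(\theta_t)-B_t(\theta_t)K)x_t$ is exponentially robustly mean-square stable with rate $\beta\in(0,1)$ if and only if its expanded system $\tilde x_{t+1}=\mathcal{C}(F(\tilde\theta_t,K))\tilde x_t$ is exponentially robustly stable with rate $\tilde\beta\in(0,1)$ satisfying $\tilde\beta=\beta^2$.
   Context: Let $n,m,d_\theta$ be positive integers and $\mathbb{S}_\theta\subset\mathbb{R}^{d_\theta}$. Consider $x_{t+1}=A_t(\theta_t)x_t+B_t(\theta_t)u_t$, $t=0,1,2,\dots$, with $x_t\in\mathbb{R}^n$, $u_t\in\mathbb{R}^m$, deterministic $x_0$, uncertain $\theta_t\in\mathbb{S}_\theta$. The random vector $v_t(\theta_t):=\mathrm{vec}([A_t(\theta_t),B_t(\theta_t)])\in\mathbb{R}^{n(n+m)}$ has a Lebesgue-measurable conditional density $p(v_t\mid\theta_t)$, and for every $s\ge1$ the conditional density of $(v_0,\dots,v_s)$ given $(\theta_0,\theta_1,\dots)$ is $\prod_{t=0}^sp(v_t\mid\theta_t)$; $\mathrm{E}[\cdot|_{\theta_\bullet}]$ is conditional expectation given $(\theta_0,\theta_1,\dots)$. $\mathrm{vec}$ stacks columns; $\mathrm{vech}(X)$ stacks columnwise the entries on and below the diagonal. $\mathbb{P}_N:=\{\varphi\in\mathbb{R}^N:\varphi_k\ge0,\sum_k\varphi_k=1\}$. The system is SMP: there exist $N$, symmetric $M^{(1)},\dots,M^{(N)}\in\mathbb{R}^{n(n+m)\times n(n+m)}$, and $\phi:\mathbb{S}_\theta\to\mathbb{P}_N$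 with $\mathrm{E}[v_tv_t^\top|_{\theta_\bullet}]=\sum_k[\phi(\theta_t)]_kM^{(k)}$ for all $t$ and all sequences in $\mathbb{S}_\theta$. It is TI if $\theta_t=\theta$ is constant in $t$ (then parameter sequences below are constant), TV otherwise. For $K\in\mathbb{R}^{m\times n}$ the closed loop is $x_{t+1}=(A_t(\theta_t)-B_t(\theta_t)K)x_t$. It is exponentially robustly mean-square stable (with rate $\beta$) if there exist $\alpha\in(0,\infty)$, $\beta\in(0,1)$ with $\sqrt{\mathrm{E}[\|x_t\|^2|_{\theta_\bullet}]}\le\alpha\|x_0\|\beta^t$ for all $x_0\in\mathbb{R}^n$, all $\theta_0,\theta_1,\dots\in\mathbb{S}_\theta$, and all $t$. Expanded system: $\tilde n=n(n+1)/2$; $E_e\in\mathbb{R}^{\tilde n\times n^2}$ with $E_e\mathrm{vec}(X)=\mathrm{vech}(X)$ for all $X$; $D\in\mathbb{R}^{n^2\times\tilde n}$ with $D\mathrm{vech}(Y)=\mathrm{vec}(Y)$ for symmetric $Y$; $\mathcal{C}(Y):=E_eYD$. With blocks $M^{(k)}_{i,j}\in\mathbb{R}^{n\times n}$ ($i,j\le n+m$) of $M^{(k)}$: column $n(j-1)+i$ of $F^{(k)}_{aa}$ is $\mathrm{vec}(M^{(k)}_{i,j})$; column $m(j-1)+i'$ of $F^{(k)}_{ab}$ is $\mathrm{vec}(M^{(k)}_{n+i',j})$; column $n(j'-1)+i$ of $F^{(k)}_{ba}$ is $\mathrm{vec}(M^{(k)}_{i,n+j'})$; column $m(j'-1)+i'$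 of $F^{(k)}_{bb}$ is $\mathrm{vec}(M^{(k)}_{n+i',n+j'})$ ($i,j\le n$, $i',j'\le m$). $F^{(k)}(K):=F^{(k)}_{aa}-F^{(k)}_{ab}(I_n\otimes K)-F^{(k)}_{ba}(K\otimes I_n)+F^{(k)}_{bb}(K\otimes K)$, $F(\tilde\theta,K):=\sum_k[\tilde\theta]_kF^{(k)}(K)$. Expanded system: $\tilde x_{t+1}=\mathcal{C}(F(\tilde\theta_t,K))\tilde x_t$, $\tilde x_t\in\mathbb{R}^{\tilde n}$, $\tilde\theta_t\in\tilde{\mathbb{S}}:=\{\phi(\theta):\theta\in\mathbb{S}_\theta\}$; TI/TV as the SMP system. It is exponentially robustly stable (with rate $\tilde\beta$) if there exist $\tilde\alpha\in(0,\infty)$, $\tilde\beta\in(0,1)$ with $\|\tilde x_t\|\le\tilde\alpha\|\tilde x_0\|\tilde\beta^t$ for all $\tilde x_0$, all $\tilde\theta_0,\tilde\theta_1,\dots\in\tilde{\mathbb{S}}$, and all $t$. *)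

theory Defs
  imports "HOL-Probability.Probability"
begin

text \<open>Conventions: vectors in R^k are functions nat => real (only the entries with
index < k matter), matrices are functions nat => nat => real with explicit
dimensions; all indices are 0-based.  Column stacking: vec(X) at index r + rows*c
is X r c.\<close>

type_synonym rmat = "nat \<Rightarrow> nat \<Rightarrow> real"
type_synonym rvec = "nat \<Rightarrow> real"

definition enorm :: "nat \<Rightarrow> rvec \<Rightarrow> real" where
  "enorm k x = sqrt (\<Sum>i<k. (x i)\<^sup>2)"

definition mmul :: "nat \<Rightarrow> rmat \<Rightarrow> rmat \<Rightarrow> rmat" where
  "mmul q A B = (\<lambda>i j. \<Sum>l<q. A i l * B l j)"

definition mvmul :: "nat \<Rightarrow> rmat \<Rightarrow> rvec \<Rightarrow> rvec" where
  "mvmul q A x = (\<lambda>i. \<Sum>l<q. A i l * x l)"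

definition idm :: rmat where
  "idm = (\<lambda>i j. if i = j then 1 else 0)"

definition kron :: "nat \<Rightarrow> nat \<Rightarrow> rmat \<Rightarrow> rmat \<Rightarrow> rmat" where
  "kron r s A B = (\<lambda>i j. A (i div r) (j div s) * B (i mod r) (j mod s))"

definition LebR :: "nat \<Rightarrow> rvec measure" where
  "LebR N = completion (PiM {..<N} (\<lambda>_. lborel))"

text \<open>v = vec([A,B]) with A n x n, B n x m.\<close>
definition Amat :: "nat \<Rightarrow> rvec \<Rightarrow> rmat" where
  "Amat n v = (\<lambda>r c. v (r + n * c))"

definition Bmat :: "nat \<Rightarrow> rvec \<Rightarrow> rmat" where
  "Bmat n v = (\<lambda>r c. v (r + n * (n + c)))"

definition cl_step :: "nat \<Rightarrow> nat \<Rightarrow> rmat \<Rightarrow> rvec \<Rightarrow> rvec \<Rightarrow> rvec" where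
  "cl_step n m K v x = (\<lambda>r. \<Sum>c<n. (Amat n v r c - (\<Sum>j<m. Bmat n v r j * K j c)) * x c)"

primrec traj :: "nat \<Rightarrow> nat \<Rightarrow> rmat \<Rightarrow> rvec \<Rightarrow> (nat \<Rightarrow> rvec) \<Rightarrow> nat \<Rightarrow> rvec" where
  "traj n m K x0 vs 0 = x0"
| "traj n m K x0 vs (Suc t) = cl_step n m K (vs t) (traj n m K x0 vs t)"

text \<open>Conditional distribution of v_t given theta_t = th, with density p th.\<close>
definition vdist :: "nat \<Rightarrow> nat \<Rightarrow> ('p \<Rightarrow> rvec \<Rightarrow> real) \<Rightarrow> 'p \<Rightarrow> rvec measure" where
  "vdist n m p th = density (LebR (n * (n + m))) (\<lambda>v. ennreal (p th v))"

text \<open>Admissible parameter sequences: constant (TI) or arbitrary (TV).\<close>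
definition param_seqs :: "bool \<Rightarrow> 'p set \<Rightarrow> (nat \<Rightarrow> 'p) set" where
  "param_seqs ti S = (if ti then {th. \<exists>c\<in>S. \<forall>t. th t = c} else {th. \<forall>t. th t \<in> S})"

definition is_SMP :: "nat \<Rightarrow> nat \<Rightarrow> 'p set \<Rightarrow> ('p \<Rightarrow> rvec \<Rightarrow> real) \<Rightarrow> nat
      \<Rightarrow> (nat \<Rightarrow> rmat) \<Rightarrow> ('p \<Rightarrow> nat \<Rightarrow> real) \<Rightarrow> bool" where
  "is_SMP n m S p N Ms phi \<longleftrightarrow>
     (\<forall>k<N. \<forall>i<n*(n+m). \<forall>j<n*(n+m). Ms k i j = Ms k j i) \<and>
     (\<forall>th\<in>S. (\<forall>k<N. phi th k \<ge> 0) \<and> (\<Sum>k<N. phi th k) = 1) \<and>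
     (\<forall>th\<in>S. \<forall>i<n*(n+m). \<forall>j<n*(n+m).
        integrable (vdist n m p th) (\<lambda>v. v i * v j) \<and>
        (\<integral>v. v i * v j \<partial>vdist n m p th) = (\<Sum>k<N. phi th k * Ms k i j))"

text \<open>Exponential robust mean-square stability with rate beta
  (sqrt(E||x_t||^2) <= alpha ||x0|| beta^t, written in squared form with the
  nonnegative Lebesgue integral as expectation).\<close>
definition ms_stable_rate :: "nat \<Rightarrow> nat \<Rightarrow> rmat \<Rightarrow> ('p \<Rightarrow> rvec \<Rightarrow> real) \<Rightarrow> (nat \<Rightarrow> 'p) set
      \<Rightarrow> real \<Rightarrow> bool" where
  "ms_stable_rate n m K p Seqs \<beta> \<longleftrightarrow> 0 < \<beta> \<and> \<beta> < 1 \<and>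
     (\<exists>\<alpha>>0. \<forall>x0 th t. th \<in> Seqs \<longrightarrow>
        (\<integral>\<^sup>+ vs. ennreal ((enorm n (traj n m K x0 vs t))\<^sup>2)
            \<partial>(PiM {..<t} (\<lambda>s. vdist n m p (th s))))
        \<le> ennreal ((\<alpha> * enorm n x0 * \<beta> ^ t)\<^sup>2))"

text \<open>Blocks M_{i,j} (n x n) of M: rows n*i.., columns n*j.. (0-based).\<close>
definition Faa :: "nat \<Rightarrow> rmat \<Rightarrow> rmat" where
  "Faa n M = (\<lambda>a b. M (n * (b mod n) + a mod n) (n * (b div n) + a div n))"
definition Fab :: "nat \<Rightarrow> nat \<Rightarrow> rmat \<Rightarrow> rmat" where
  "Fab n m M = (\<lambda>a b. M (n * (n + b mod m) + a mod n) (n * (b div m) + a div n))"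
definition Fba :: "nat \<Rightarrow> rmat \<Rightarrow> rmat" where
  "Fba n M = (\<lambda>a b. M (n * (b mod n) + a mod n) (n * (n + b div n) + a div n))"
definition Fbb :: "nat \<Rightarrow> nat \<Rightarrow> rmat \<Rightarrow> rmat" where
  "Fbb n m M = (\<lambda>a b. M (n * (n + b mod m) + a mod n) (n * (n + b div m) + a div n))"

definition Fk :: "nat \<Rightarrow> nat \<Rightarrow> rmat \<Rightarrow> rmat \<Rightarrow> rmat" where
  "Fk n m M K = (\<lambda>a b. Faa n M a b
      - mmul (n * m) (Fab n m M) (kron m n idm K) a b
      - mmul (m * n) (Fba n M) (kron n n K idm) a b
      + mmul (m * m) (Fbb n m M) (kron m n K K) a b)"

definition Fth :: "nat \<Rightarrow> nat \<Rightarrow> nat \<Rightarrow> (nat \<Rightarrow> rmat) \<Rightarrow> rvec \<Rightarrow> rmat \<Rightarrow> rmat" where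
  "Fth n m N Ms th K = (\<lambda>a b. \<Sum>k<N. th k * Fk n m (Ms k) K a b)"

text \<open>vech: position of entry (r,c), c <= r, in vech of an n x n matrix.\<close>
definition vech_pos :: "nat \<Rightarrow> nat \<Rightarrow> nat \<Rightarrow> nat" where
  "vech_pos n r c = (\<Sum>k<c. n - k) + (r - c)"

definition ntil :: "nat \<Rightarrow> nat" where
  "ntil n = n * (n + 1) div 2"

text \<open>E_e (ntil x n^2): E_e vec(X) = vech(X).  D (n^2 x ntil): D vech(Y) = vec(Y).\<close>
definition Ee :: "nat \<Rightarrow> rmat" where
  "Ee n = (\<lambda>p q. if \<exists>r c. c \<le> r \<and> r < n \<and> p = vech_pos n r c \<and> q = r + n * c then 1 else 0)"

definition Dd :: "nat \<Rightarrow> rmat" where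
  "Dd n = (\<lambda>q p. if p = vech_pos n (max (q mod n) (q div n)) (min (q mod n) (q div n))
                 then 1 else 0)"

definition Cmap :: "nat \<Rightarrow> rmat \<Rightarrow> rmat" where
  "Cmap n Y = mmul (n * n) (mmul (n * n) (Ee n) Y) (Dd n)"

primrec xtraj :: "nat \<Rightarrow> nat \<Rightarrow> nat \<Rightarrow> (nat \<Rightarrow> rmat) \<Rightarrow> rmat \<Rightarrow> rvec \<Rightarrow> (nat \<Rightarrow> rvec) \<Rightarrow> nat \<Rightarrow> rvec" where
  "xtraj n m N Ms K x0 ths 0 = x0"
| "xtraj n m N Ms K x0 ths (Suc t) = mvmul (ntil n) (Cmap n (Fth n m N Ms (ths t) K)) (xtraj n m N Ms K x0 ths t)"

definition exp_stable_rate :: "nat \<Rightarrow> nat \<Rightarrow> nat \<Rightarrow> (nat \<Rightarrow> rmat) \<Rightarrow> rmat \<Rightarrow> (nat \<Rightarrow> rvec) set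
      \<Rightarrow> real \<Rightarrow> bool" where
  "exp_stable_rate n m N Ms K Seqs \<beta> \<longleftrightarrow> 0 < \<beta> \<and> \<beta> < 1 \<and>
     (\<exists>\<alpha>>0. \<forall>x0 ths t. ths \<in> Seqs \<longrightarrow>
        enorm (ntil n) (xtraj n m N Ms K x0 ths t) \<le> \<alpha> * enorm (ntil n) x0 * \<beta> ^ t)"

end

theory Submission
  imports Defs
begin
definition Tset :: "nat \<Rightarrow> (nat \<times> nat) set" where
  "Tset n = {(r,c). c \<le> r \<and> r < n}"

definition Spos :: "nat \<Rightarrow> nat \<Rightarrow> nat" where
  "Spos n c = (\<Sum>k<c. n - k)"

lemma Spos_Suc: "Spos n (Suc c) = Spos n c + (n - c)"
  by (simp add: Spos_def)

lemma Spos_mono: "c \<le> c' \<Longrightarrow> Spos n c \<le> Spos n c'"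
  unfolding Spos_def by (rule sum_mono2) auto

lemma vp_lt: "c \<le> r \<Longrightarrow> r < n \<Longrightarrow> vech_pos n r c < Spos n (Suc c)"
  unfolding vech_pos_def Spos_Suc by (simp add: Spos_def)

lemma vp_ge: "vech_pos n r c \<ge> Spos n c"
  unfolding vech_pos_def Spos_def by simp

lemma Spos_n: "Spos n n = ntil n"
proof -
  have "(\<Sum>k<n. n - k) = (\<Sum>k<n. Suc k)"
  proof (rule sum.reindex_bij_witness[where i="\<lambda>k. n - Suc k" and j="\<lambda>k. n - Suc k"])
  qed auto
  also have "\<dots> = (\<Sum>k\<in>{0..n}. k)"
  proof -
    have "(\<Sum>k<n. Suc k) = (\<Sum>k\<in>Suc ` {..<n}. k)" by (simp add: sum.reindex)
    also have "Suc ` {..<n} = {1..n}" by (simp add: lessThan_atLeast0 image_Suc_atLeastLessThan atLeastLessThanSuc_atLeastAtMost)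
    also have "(\<Sum>k\<in>{1..n}. k) = (\<Sum>k\<in>{0..n}. k)"
      by (simp add: sum.atLeast_Suc_atMost)
    finally show ?thesis .
  qed
  also have "\<dots> = n * Suc n div 2" using gauss_sum_nat by simp
  finally show ?thesis unfolding Spos_def ntil_def by simp
qed

lemma vp_bound: "c \<le> r \<Longrightarrow> r < n \<Longrightarrow> vech_pos n r c < ntil n"
proof -
  assume a: "c \<le> r" "r < n"
  have "vech_pos n r c < Spos n (Suc c)" using a vp_lt by auto
  also have "\<dots> \<le> Spos n n" using a by (intro Spos_mono) auto
  finally show ?thesis using Spos_n by simp
qed

lemma vp_inj_aux: "c \<le> r \<Longrightarrow> r < n \<Longrightarrow> c' \<le> r' \<Longrightarrow> r' < n \<Longrightarrow> c < c' \<Longrightarrow> vech_pos n r c < vech_pos n r' c'"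
proof -
  assume a: "c \<le> r" "r < n" "c' \<le> r'" "r' < n" "c < c'"
  have "vech_pos n r c < Spos n (Suc c)" using a vp_lt by auto
  also have "\<dots> \<le> Spos n c'" using a Spos_mono by auto
  also have "\<dots> \<le> vech_pos n r' c'" by (rule vp_ge)
  finally show ?thesis .
qed

lemma vp_inj: "c \<le> r \<Longrightarrow> r < n \<Longrightarrow> c' \<le> r' \<Longrightarrow> r' < n \<Longrightarrow> vech_pos n r c = vech_pos n r' c' \<Longrightarrow> r = r' \<and> c = c'"
proof -
  assume a: "c \<le> r" "r < n" "c' \<le> r'" "r' < n" "vech_pos n r c = vech_pos n r' c'"
  have "c = c'"
  proof (rule ccontr)
    assume "c \<noteq> c'"
    then consider "c < c'" | "c' < c" by linarith
    then show False using vp_inj_aux[of c r n c' r'] vp_inj_aux[of c' r' n c r] a by (cases, auto)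
  qed
  then show ?thesis using a by (auto simp: vech_pos_def)
qed

lemma card_Tset: "card (Tset n) = ntil n"
proof -
  have e: "Tset n = (\<lambda>(c,r). (r,c)) ` (SIGMA c:{..<n}. {c..<n})"
    by (auto simp: Tset_def image_iff)
  have "card (Tset n) = card (SIGMA c:{..<n}. {c..<n})"
    unfolding e by (rule card_image) (auto simp: inj_on_def)
  also have "\<dots> = (\<Sum>c<n. n - c)" by (simp add: card_SigmaI)
  finally show ?thesis using Spos_n unfolding Spos_def by simp
qed

lemma vp_image: "(\<lambda>(r,c). vech_pos n r c) ` Tset n = {..<ntil n}"
proof (rule card_subset_eq)
  show "(\<lambda>(r,c). vech_pos n r c) ` Tset n \<subseteq> {..<ntil n}"
    using vp_bound by (auto simp: Tset_def)
  have "inj_on (\<lambda>(r,c). vech_pos n r c) (Tset n)"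
    by (auto simp: inj_on_def Tset_def dest: vp_inj)
  then show "card ((\<lambda>(r,c). vech_pos n r c) ` Tset n) = card {..<ntil n}"
    by (simp add: card_image card_Tset)
qed simp

lemma vp_surj: "p < ntil n \<Longrightarrow> \<exists>r c. c \<le> r \<and> r < n \<and> p = vech_pos n r c"
proof -
  assume "p < ntil n"
  then have "p \<in> (\<lambda>(r,c). vech_pos n r c) ` Tset n" using vp_image[of n] by simp
  then obtain r c where "(r,c) \<in> Tset n" "p = vech_pos n r c" by auto
  then show ?thesis by (auto simp: Tset_def)
qed

lemma sum_dm: "(\<Sum>l<q*(p::nat). f l) = (\<Sum>j<p. \<Sum>i<q. f (i + q*j))"
proof (induction p)
  case 0 then show ?case by simp
next
  case (Suc p)
  have "(\<Sum>l<q*Suc p. f l) = (\<Sum>l\<in>{0..<q*p}. f l) + (\<Sum>l\<in>{q*p..<q*p+q}. f l)"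
    by (subst sum.atLeastLessThan_concat) (auto simp: lessThan_atLeast0 algebra_simps)
  also have "(\<Sum>l\<in>{q*p..<q*p+q}. f l) = (\<Sum>i<q. f (i + q*p))"
    using sum.shift_bounds_nat_ivl[of f 0 "q*p" q] by (simp add: lessThan_atLeast0 add.commute)
  finally show ?case using Suc by (simp add: lessThan_atLeast0[symmetric])
qed

lemma sum_ind: "finite A \<Longrightarrow> v \<in> A \<Longrightarrow> (\<Sum>l\<in>A. (if l = v then 1 else 0) * (g l::real)) = g v"
proof -
  assume a: "finite A" "v \<in> A"
  have "(\<Sum>l\<in>A. (if l = v then 1 else 0) * g l) = (\<Sum>l\<in>A. if l = v then g l else 0)"
    by (intro sum.cong) auto
  also have "\<dots> = g v" using a by (simp add: sum.delta)
  finally show ?thesis .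
qed

lemma idx_lt: "r < n \<Longrightarrow> c < n \<Longrightarrow> r + n*c < n*(n::nat)"
proof -
  assume a: "r < n" "c < n"
  have "r + n*c < n + n*c" using a by simp
  also have "\<dots> = n * Suc c" by simp
  also have "\<dots> \<le> n*n" using a by (intro mult_le_mono2) auto
  finally show ?thesis .
qed

lemma Ee_at: "c \<le> r \<Longrightarrow> r < n \<Longrightarrow> Ee n (vech_pos n r c) q = (if q = r + n*c then 1 else 0)"
  unfolding Ee_def using vp_inj[of c r n] by auto

lemma Ee_sum: "c \<le> r \<Longrightarrow> r < n \<Longrightarrow> (\<Sum>q<n*n. Ee n (vech_pos n r c) q * w q) = w (r + n*c)"
proof -
  assume a: "c \<le> r" "r < n"
  have "(\<Sum>q<n*n. Ee n (vech_pos n r c) q * w q) = (\<Sum>q<n*n. if q = r + n*c then w q else 0)"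
    using a by (intro sum.cong) (auto simp: Ee_at)
  also have "\<dots> = w (r + n*c)" using idx_lt[of r n c] a by (simp add: sum.delta')
  finally show ?thesis .
qed

lemma Dd_sum: "0 < n \<Longrightarrow> b < n*n \<Longrightarrow>
   (\<Sum>l<ntil n. Dd n b l * x l) = x (vech_pos n (max (b mod n) (b div n)) (min (b mod n) (b div n)))"
proof -
  assume a: "0 < n" "b < n*n"
  have "b div n < n" using a by (simp add: less_mult_imp_div_less)
  moreover have "b mod n < n" using a by simp
  ultimately have "vech_pos n (max (b mod n) (b div n)) (min (b mod n) (b div n)) < ntil n"
    by (intro vp_bound) auto
  then show ?thesis unfolding Dd_def by (simp add: sum_ind)
qed

lemma mv_Cmap: "mvmul (ntil n) (Cmap n F) x p =
   (\<Sum>q<n*n. Ee n p q * (\<Sum>j<n*n. F q j * (\<Sum>l<ntil n. Dd n j l * x l)))"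
proof -
  have "mvmul (ntil n) (Cmap n F) x p = (\<Sum>l<ntil n. \<Sum>j<n*n. \<Sum>q<n*n. Ee n p q * F q j * Dd n j l * x l)"
    by (simp add: mvmul_def Cmap_def mmul_def sum_distrib_right)
  also have "\<dots> = (\<Sum>j<n*n. \<Sum>l<ntil n. \<Sum>q<n*n. Ee n p q * F q j * Dd n j l * x l)"
    by (rule sum.swap)
  also have "\<dots> = (\<Sum>j<n*n. \<Sum>q<n*n. \<Sum>l<ntil n. Ee n p q * F q j * Dd n j l * x l)"
    by (intro sum.cong refl sum.swap)
  also have "\<dots> = (\<Sum>q<n*n. \<Sum>j<n*n. \<Sum>l<ntil n. Ee n p q * F q j * Dd n j l * x l)"
    by (rule sum.swap)
  also have "\<dots> = (\<Sum>q<n*n. Ee n p q * (\<Sum>j<n*n. F q j * (\<Sum>l<ntil n. Dd n j l * x l)))"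
    by (simp add: sum_distrib_left mult.assoc)
  finally show ?thesis .
qed

definition rep :: "nat \<Rightarrow> rvec \<Rightarrow> rmat \<Rightarrow> bool" where
  "rep n x Z \<longleftrightarrow> (\<forall>r c. c \<le> r \<longrightarrow> r < n \<longrightarrow> x (vech_pos n r c) = Z r c)"

definition symm :: "nat \<Rightarrow> rmat \<Rightarrow> bool" where
  "symm n Z \<longleftrightarrow> (\<forall>r c. r < n \<longrightarrow> c < n \<longrightarrow> Z r c = Z c r)"

lemma Cmap_step:
  assumes n: "0 < n" and sy: "symm n Z" and rp: "rep n x Z"
    and FH: "\<And>r r' c c'. r<n \<Longrightarrow> r'<n \<Longrightarrow> c<n \<Longrightarrow> c'<n \<Longrightarrow> F (r + n*r') (c + n*c') = H r c r' c'"
  shows "rep n (mvmul (ntil n) (Cmap n F) x) (\<lambda>r r'. \<Sum>c<n. \<Sum>c'<n. H r c r' c' * Z c c')"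
  unfolding rep_def
proof (intro allI impI)
  fix r t assume rs: "t \<le> r" "r < n"
  have inner: "(\<Sum>l<ntil n. Dd n j l * x l) = Z (j mod n) (j div n)" if j: "j < n*n" for j
  proof -
    have jd: "j div n < n" using j n by (simp add: less_mult_imp_div_less)
    have jm: "j mod n < n" using n by simp
    show ?thesis
    proof (cases "j div n \<le> j mod n")
      case True then show ?thesis using Dd_sum[OF n j, of x] rp jm unfolding rep_def by simp
    next
      case False then show ?thesis using Dd_sum[OF n j, of x] rp jd jm sy unfolding rep_def symm_def by simp
    qed
  qed
  have "mvmul (ntil n) (Cmap n F) x (vech_pos n r t) =
      (\<Sum>q<n*n. Ee n (vech_pos n r t) q * (\<Sum>j<n*n. F q j * Z (j mod n) (j div n)))"
    unfolding mv_Cmap using inner by (intro sum.cong refl arg_cong2[where f="(*)"]) auto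
  also have "\<dots> = (\<Sum>j<n*n. F (r + n*t) j * Z (j mod n) (j div n))"
    by (rule Ee_sum[OF rs])
  also have "\<dots> = (\<Sum>c'<n. \<Sum>c<n. F (r + n*t) (c + n*c') * Z c c')"
    using n by (simp add: sum_dm)
  also have "\<dots> = (\<Sum>c'<n. \<Sum>c<n. H r c t c' * Z c c')"
    using rs by (intro sum.cong refl) (simp add: FH)
  also have "\<dots> = (\<Sum>c<n. \<Sum>c'<n. H r c t c' * Z c c')"
    by (rule sum.swap)
  finally show "mvmul (ntil n) (Cmap n F) x (vech_pos n r t) = (\<Sum>c<n. \<Sum>c'<n. H r c t c' * Z c c')" .
qed

lemma dm_simps: "0 < (q::nat) \<Longrightarrow> i < q \<Longrightarrow> (i + q*j) div q = j \<and> (i + q*j) mod q = i"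
  by simp

lemma mm_ab:
  assumes "0<n" "0<m" "r<n" "r'<n" "c<n" "c'<n"
  shows "mmul (n*m) (Fab n m M) (kron m n idm K) (r + n*r') (c + n*c') = (\<Sum>j<m. K j c * M (r + n*(n+j)) (r' + n*c'))"
proof -
  have "mmul (n*m) (Fab n m M) (kron m n idm K) (r + n*r') (c + n*c')
      = (\<Sum>j2<n. \<Sum>i<m. Fab n m M (r + n*r') (i + m*j2) * kron m n idm K (i + m*j2) (c + n*c'))"
    unfolding mmul_def by (subst mult.commute) (rule sum_dm)
  also have "\<dots> = (\<Sum>j2<n. (if j2 = c' then 1 else 0) * (\<Sum>i<m. K i c * M (r + n*(n+i)) (r' + n*j2)))"
    using assms by (intro sum.cong refl) (auto simp: Fab_def kron_def idm_def dm_simps algebra_simps)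
  also have "\<dots> = (\<Sum>i<m. K i c * M (r + n*(n+i)) (r' + n*c'))"
    using assms by (simp add: sum_ind)
  finally show ?thesis .
qed

lemma mm_ba:
  assumes "0<n" "0<m" "r<n" "r'<n" "c<n" "c'<n"
  shows "mmul (m*n) (Fba n M) (kron n n K idm) (r + n*r') (c + n*c') = (\<Sum>j<m. K j c' * M (r + n*c) (r' + n*(n+j)))"
proof -
  have "mmul (m*n) (Fba n M) (kron n n K idm) (r + n*r') (c + n*c')
      = (\<Sum>j<m. \<Sum>i<n. Fba n M (r + n*r') (i + n*j) * kron n n K idm (i + n*j) (c + n*c'))"
    unfolding mmul_def by (subst mult.commute) (rule sum_dm)
  also have "\<dots> = (\<Sum>j<m. \<Sum>i<n. (if i = c then 1 else 0) * (K j c' * M (r + n*i) (r' + n*(n+j))))"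
    using assms by (intro sum.cong refl) (auto simp: Fba_def kron_def idm_def dm_simps algebra_simps)
  also have "\<dots> = (\<Sum>j<m. K j c' * M (r + n*c) (r' + n*(n+j)))"
    using assms by (simp add: sum_ind)
  finally show ?thesis .
qed

lemma mm_bb:
  assumes "0<n" "0<m" "r<n" "r'<n" "c<n" "c'<n"
  shows "mmul (m*m) (Fbb n m M) (kron m n K K) (r + n*r') (c + n*c') =
     (\<Sum>j<m. \<Sum>j'<m. K j c * K j' c' * M (r + n*(n+j)) (r' + n*(n+j')))"
proof -
  have "mmul (m*m) (Fbb n m M) (kron m n K K) (r + n*r') (c + n*c')
      = (\<Sum>j'<m. \<Sum>j<m. Fbb n m M (r + n*r') (j + m*j') * kron m n K K (j + m*j') (c + n*c'))"
    unfolding mmul_def by (rule sum_dm)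
  also have "\<dots> = (\<Sum>j'<m. \<Sum>j<m. K j c * K j' c' * M (r + n*(n+j)) (r' + n*(n+j')))"
    using assms by (intro sum.cong refl) (auto simp: Fbb_def kron_def dm_simps algebra_simps)
  also have "\<dots> = (\<Sum>j<m. \<Sum>j'<m. K j c * K j' c' * M (r + n*(n+j)) (r' + n*(n+j')))"
    by (rule sum.swap)
  finally show ?thesis .
qed

lemma Fk_entry:
  assumes "0<n" "0<m" "r<n" "r'<n" "c<n" "c'<n"
  shows "Fk n m M K (r + n*r') (c + n*c') =
   M (r + n*c) (r' + n*c')
   - (\<Sum>j<m. K j c * M (r + n*(n+j)) (r' + n*c'))
   - (\<Sum>j<m. K j c' * M (r + n*c) (r' + n*(n+j)))
   + (\<Sum>j<m. \<Sum>j'<m. K j c * K j' c' * M (r + n*(n+j)) (r' + n*(n+j')))"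
  unfolding Fk_def mm_ab[OF assms] mm_ba[OF assms] mm_bb[OF assms] using assms
  by (simp add: Faa_def dm_simps add.commute)

definition Lm :: "nat \<Rightarrow> nat \<Rightarrow> rmat \<Rightarrow> rvec \<Rightarrow> rmat" where
  "Lm n m K v r c = Amat n v r c - (\<Sum>j<m. Bmat n v r j * K j c)"

lemma cl_step_Lm: "cl_step n m K v x r = (\<Sum>c<n. Lm n m K v r c * x c)"
  by (simp add: cl_step_def Lm_def)

lemma idxA: "r < n \<Longrightarrow> c < n \<Longrightarrow> r + n*c < n*(n+(m::nat))"
proof -
  assume a: "r < n" "c < n"
  have "r + n*c < n*n" using idx_lt a by blast
  also have "\<dots> \<le> n*(n+m)" by simp
  finally show ?thesis .
qed

lemma idxB: "r < n \<Longrightarrow> j < m \<Longrightarrow> r + n*(n+j) < n*(n+(m::nat))"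
proof -
  assume a: "r < n" "j < m"
  have "r + n*(n+j) < n + n*(n+j)" using a by simp
  also have "\<dots> = n * Suc (n+j)" by simp
  also have "\<dots> \<le> n*(n+m)" using a by (intro mult_le_mono2) auto
  finally show ?thesis .
qed

lemma Lprod: "Lm n m K v r c * Lm n m K v r' c' =
   v (r + n*c) * v (r' + n*c')
   - (\<Sum>j<m. K j c * (v (r + n*(n+j)) * v (r' + n*c')))
   - (\<Sum>j<m. K j c' * (v (r + n*c) * v (r' + n*(n+j))))
   + (\<Sum>j<m. \<Sum>j'<m. K j c * K j' c' * (v (r + n*(n+j)) * v (r' + n*(n+j'))))"
proof -
  define x where "x = v (r + n*c)"
  define y where "y = v (r' + n*c')"
  define S1 where "S1 = (\<Sum>j<m. v (r + n*(n+j)) * K j c)"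
  define S2 where "S2 = (\<Sum>j<m. v (r' + n*(n+j)) * K j c')"
  have "Lm n m K v r c * Lm n m K v r' c' = (x - S1) * (y - S2)"
    by (simp add: Lm_def Amat_def Bmat_def x_def y_def S1_def S2_def)
  also have "\<dots> = x*y - S1*y - x*S2 + S1*S2" by (simp add: algebra_simps)
  also have "S1*y = (\<Sum>j<m. K j c * (v (r + n*(n+j)) * v (r' + n*c')))"
    unfolding S1_def y_def sum_distrib_right by (intro sum.cong) (auto simp: algebra_simps)
  also have "x*S2 = (\<Sum>j<m. K j c' * (v (r + n*c) * v (r' + n*(n+j))))"
    by (simp add: S2_def x_def sum_distrib_left algebra_simps)
  also have "S1*S2 = (\<Sum>j<m. \<Sum>j'<m. K j c * K j' c' * (v (r + n*(n+j)) * v (r' + n*(n+j'))))"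
    by (simp add: S1_def S2_def sum_product algebra_simps)
  finally show ?thesis by (simp add: x_def y_def)
qed

locale smpctx =
  fixes n m N :: nat and S :: "'p set" and p :: "'p \<Rightarrow> rvec \<Rightarrow> real"
    and phi :: "'p \<Rightarrow> nat \<Rightarrow> real" and Ms :: "nat \<Rightarrow> rmat" and K :: rmat
  assumes npos: "0 < n" and mpos: "0 < m"
    and dens: "\<forall>th\<in>S. (\<forall>v. 0 \<le> p th v) \<and> p th \<in> borel_measurable (LebR (n*(n+m))) \<and> prob_space (vdist n m p th)"
    and smp: "is_SMP n m S p N Ms phi"
begin

definition Hq :: "'p \<Rightarrow> nat \<Rightarrow> nat \<Rightarrow> nat \<Rightarrow> nat \<Rightarrow> real" where
  "Hq th r c r' c' = (\<integral>v. Lm n m K v r c * Lm n m K v r' c' \<partial>vdist n m p th)"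

lemma mom_int: "th \<in> S \<Longrightarrow> k < n*(n+m) \<Longrightarrow> k' < n*(n+m) \<Longrightarrow> integrable (vdist n m p th) (\<lambda>v. v k * v k')"
  using smp unfolding is_SMP_def by blast

lemma mom_val: "th \<in> S \<Longrightarrow> k < n*(n+m) \<Longrightarrow> k' < n*(n+m) \<Longrightarrow>
   (\<integral>v. v k * v k' \<partial>vdist n m p th) = (\<Sum>i<N. phi th i * Ms i k k')"
  using smp unfolding is_SMP_def by blast

lemma Hq_int:
  assumes th: "th \<in> S" and idx: "r<n" "r'<n" "c<n" "c'<n"
  shows "integrable (vdist n m p th) (\<lambda>v. Lm n m K v r c * Lm n m K v r' c')"
    and "Hq th r c r' c' = Fth n m N Ms (phi th) K (r + n*r') (c + n*c')"
proof -
  let ?M = "vdist n m p th"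
  let ?E = "\<lambda>k k'. (\<integral>v. v k * v k' \<partial>?M)"
  have I: "integrable ?M (\<lambda>v. v k * v k')" if "k < n*(n+m)" "k' < n*(n+m)" for k k'
    using mom_int[OF th that] .
  note iA = idxA[of _ n _ m] and iB = idxB[of _ n _ m]
  have eq: "(\<lambda>v. Lm n m K v r c * Lm n m K v r' c') = (\<lambda>v.
   v (r + n*c) * v (r' + n*c')
   - (\<Sum>j<m. K j c * (v (r + n*(n+j)) * v (r' + n*c')))
   - (\<Sum>j<m. K j c' * (v (r + n*c) * v (r' + n*(n+j))))
   + (\<Sum>j<m. \<Sum>j'<m. K j c * K j' c' * (v (r + n*(n+j)) * v (r' + n*(n+j')))))"
    by (rule ext) (rule Lprod)
  show "integrable ?M (\<lambda>v. Lm n m K v r c * Lm n m K v r' c')"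
    unfolding eq
    by (intro Bochner_Integration.integrable_diff Bochner_Integration.integrable_add
       Bochner_Integration.integrable_sum Bochner_Integration.integrable_mult_right I iA iB) (auto simp: idx)
  define f1 where "f1 = (\<lambda>v::rvec. v (r + n*c) * v (r' + n*c'))"
  define f2 where "f2 = (\<lambda>v::rvec. \<Sum>j<m. K j c * (v (r + n*(n+j)) * v (r' + n*c')))"
  define f3 where "f3 = (\<lambda>v::rvec. \<Sum>j<m. K j c' * (v (r + n*c) * v (r' + n*(n+j))))"
  define f4 where "f4 = (\<lambda>v::rvec. \<Sum>j<m. \<Sum>j'<m. K j c * K j' c' * (v (r + n*(n+j)) * v (r' + n*(n+j'))))"
  have i1: "integrable ?M f1" unfolding f1_def using idx by (intro I iA) auto
  have i2: "integrable ?M f2" unfolding f2_def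
    by (intro Bochner_Integration.integrable_sum Bochner_Integration.integrable_mult_right I iA iB) (auto simp: idx)
  have i3: "integrable ?M f3" unfolding f3_def
    by (intro Bochner_Integration.integrable_sum Bochner_Integration.integrable_mult_right I iA iB) (auto simp: idx)
  have i4: "integrable ?M f4" unfolding f4_def
    by (intro Bochner_Integration.integrable_sum Bochner_Integration.integrable_mult_right I iA iB) (auto simp: idx)
  have eq2: "(\<lambda>v. Lm n m K v r c * Lm n m K v r' c') = (\<lambda>v. f1 v - f2 v - f3 v + f4 v)"
    unfolding eq f1_def f2_def f3_def f4_def ..
  have HH: "Hq th r c r' c' = integral\<^sup>L ?M f1 - integral\<^sup>L ?M f2 - integral\<^sup>L ?M f3 + integral\<^sup>L ?M f4"
    unfolding Hq_def eq2
    by (simp add: Bochner_Integration.integral_add Bochner_Integration.integral_diff i1 i2 i3 i4 Bochner_Integration.integrable_diff)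
  have j2: "integral\<^sup>L ?M f2 = (\<Sum>j<m. K j c * ?E (r + n*(n+j)) (r' + n*c'))"
    unfolding f2_def
    by (subst Bochner_Integration.integral_sum) (auto intro!: Bochner_Integration.integrable_mult_right I iA iB simp: idx)
  have j3: "integral\<^sup>L ?M f3 = (\<Sum>j<m. K j c' * ?E (r + n*c) (r' + n*(n+j)))"
    unfolding f3_def
    by (subst Bochner_Integration.integral_sum) (auto intro!: Bochner_Integration.integrable_mult_right I iA iB simp: idx)
  have j4: "integral\<^sup>L ?M f4 = (\<Sum>j<m. \<Sum>j'<m. K j c * K j' c' * ?E (r + n*(n+j)) (r' + n*(n+j')))"
    unfolding f4_def
    apply (subst Bochner_Integration.integral_sum)
     apply (auto intro!: Bochner_Integration.integrable_sum Bochner_Integration.integrable_mult_right I iA iB simp: idx)[1]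
    apply (intro sum.cong refl)
    apply (subst Bochner_Integration.integral_sum)
     apply (auto intro!: Bochner_Integration.integrable_mult_right I iA iB simp: idx)
    done
  have j1: "integral\<^sup>L ?M f1 = ?E (r + n*c) (r' + n*c')" unfolding f1_def ..
  have "Hq th r c r' c' = ?E (r + n*c) (r' + n*c')
   - (\<Sum>j<m. K j c * ?E (r + n*(n+j)) (r' + n*c'))
   - (\<Sum>j<m. K j c' * ?E (r + n*c) (r' + n*(n+j)))
   + (\<Sum>j<m. \<Sum>j'<m. K j c * K j' c' * ?E (r + n*(n+j)) (r' + n*(n+j')))"
    unfolding HH j1 j2 j3 j4 ..
  also have "\<dots> = (\<Sum>i<N. phi th i * Ms i (r + n*c) (r' + n*c'))
   - (\<Sum>j<m. K j c * (\<Sum>i<N. phi th i * Ms i (r + n*(n+j)) (r' + n*c')))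
   - (\<Sum>j<m. K j c' * (\<Sum>i<N. phi th i * Ms i (r + n*c) (r' + n*(n+j))))
   + (\<Sum>j<m. \<Sum>j'<m. K j c * K j' c' * (\<Sum>i<N. phi th i * Ms i (r + n*(n+j)) (r' + n*(n+j'))))"
  proof -
    have a1: "?E (r + n*c) (r' + n*c') = (\<Sum>i<N. phi th i * Ms i (r + n*c) (r' + n*c'))"
      using idx by (intro mom_val th iA) auto
    have a2: "(\<Sum>j<m. K j c * ?E (r + n*(n+j)) (r' + n*c')) = (\<Sum>j<m. K j c * (\<Sum>i<N. phi th i * Ms i (r + n*(n+j)) (r' + n*c')))"
      using idx by (intro sum.cong refl arg_cong2[where f="(*)"] mom_val th iA iB) auto
    have a3: "(\<Sum>j<m. K j c' * ?E (r + n*c) (r' + n*(n+j))) = (\<Sum>j<m. K j c' * (\<Sum>i<N. phi th i * Ms i (r + n*c) (r' + n*(n+j))))"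
      using idx by (intro sum.cong refl arg_cong2[where f="(*)"] mom_val th iA iB) auto
    have a4: "(\<Sum>j<m. \<Sum>j'<m. K j c * K j' c' * ?E (r + n*(n+j)) (r' + n*(n+j'))) = (\<Sum>j<m. \<Sum>j'<m. K j c * K j' c' * (\<Sum>i<N. phi th i * Ms i (r + n*(n+j)) (r' + n*(n+j'))))"
      using idx by (intro sum.cong refl arg_cong2[where f="(*)"] mom_val th iA iB) auto
    show ?thesis unfolding a1 a2 a3 a4 ..
  qed
  also have "\<dots> = (\<Sum>i<N. phi th i * Fk n m (Ms i) K (r + n*r') (c + n*c'))"
  proof -
    have e1: "(\<Sum>j<m. K j c * (\<Sum>i<N. phi th i * Ms i (r + n*(n+j)) (r' + n*c')))
        = (\<Sum>i<N. phi th i * (\<Sum>j<m. K j c * Ms i (r + n*(n+j)) (r' + n*c')))"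
      by (simp add: sum_distrib_left algebra_simps) (rule sum.swap)
    have e2: "(\<Sum>j<m. K j c' * (\<Sum>i<N. phi th i * Ms i (r + n*c) (r' + n*(n+j))))
        = (\<Sum>i<N. phi th i * (\<Sum>j<m. K j c' * Ms i (r + n*c) (r' + n*(n+j))))"
      by (simp add: sum_distrib_left algebra_simps) (rule sum.swap)
    have e3: "(\<Sum>j<m. \<Sum>j'<m. K j c * K j' c' * (\<Sum>i<N. phi th i * Ms i (r + n*(n+j)) (r' + n*(n+j'))))
        = (\<Sum>i<N. phi th i * (\<Sum>j<m. \<Sum>j'<m. K j c * K j' c' * Ms i (r + n*(n+j)) (r' + n*(n+j'))))"
    proof -
      have "(\<Sum>j<m. \<Sum>j'<m. K j c * K j' c' * (\<Sum>i<N. phi th i * Ms i (r + n*(n+j)) (r' + n*(n+j'))))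
          = (\<Sum>j<m. \<Sum>i<N. \<Sum>j'<m. phi th i * (K j c * K j' c' * Ms i (r + n*(n+j)) (r' + n*(n+j'))))"
        by (simp add: sum_distrib_left algebra_simps) (intro sum.cong refl sum.swap)
      also have "\<dots> = (\<Sum>i<N. \<Sum>j<m. \<Sum>j'<m. phi th i * (K j c * K j' c' * Ms i (r + n*(n+j)) (r' + n*(n+j'))))"
        by (rule sum.swap)
      finally show ?thesis by (simp add: sum_distrib_left)
    qed
    show ?thesis unfolding e1 e2 e3 Fk_entry[OF npos mpos idx]
      by (simp add: sum_subtractf sum.distrib algebra_simps)
  qed
  also have "\<dots> = Fth n m N Ms (phi th) K (r + n*r') (c + n*c')"
    by (simp add: Fth_def)
  finally show "Hq th r c r' c' = Fth n m N Ms (phi th) K (r + n*r') (c + n*c')" .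
qed

end

definition l1 :: "nat \<Rightarrow> rmat \<Rightarrow> real" where
  "l1 n Z = (\<Sum>r<n. \<Sum>c<n. \<bar>Z r c\<bar>)"

lemma finite_Tset: "finite (Tset n)"
  by (rule finite_subset[of _ "{..<n} \<times> {..<n}"]) (auto simp: Tset_def)

lemma N1: "rep n x Z \<Longrightarrow> enorm (ntil n) x \<le> l1 n Z"
proof -
  assume rp: "rep n x Z"
  have "enorm (ntil n) x = L2_set x {..<ntil n}" by (simp add: enorm_def L2_set_def)
  also have "\<dots> \<le> (\<Sum>p<ntil n. \<bar>x p\<bar>)" by (rule L2_set_le_sum_abs)
  also have "\<dots> = (\<Sum>p\<in>(\<lambda>(r,c). vech_pos n r c) ` Tset n. \<bar>x p\<bar>)" by (simp add: vp_image)
  also have "\<dots> \<le> (\<Sum>rc\<in>Tset n. \<bar>x (case rc of (r,c) \<Rightarrow> vech_pos n r c)\<bar>)"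
    using sum_image_le[OF finite_Tset, where g="\<lambda>p. \<bar>x p\<bar>" and f="\<lambda>(r,c). vech_pos n r c"] by (simp add: o_def)
  also have "\<dots> = (\<Sum>rc\<in>Tset n. \<bar>Z (fst rc) (snd rc)\<bar>)"
    using rp by (intro sum.cong refl) (auto simp: rep_def Tset_def)
  also have "\<dots> \<le> (\<Sum>rc\<in>{..<n} \<times> {..<n}. \<bar>Z (fst rc) (snd rc)\<bar>)"
    by (intro sum_mono2) (auto simp: Tset_def)
  also have "\<dots> = l1 n Z" by (simp add: l1_def sum.cartesian_product case_prod_unfold)
  finally show ?thesis .
qed

lemma comp_le_enorm: "p < k \<Longrightarrow> \<bar>x p\<bar> \<le> enorm k x"
proof -
  assume "p < k"
  then have "(x p)\<^sup>2 \<le> (\<Sum>i<k. (x i)\<^sup>2)" by (intro member_le_sum) auto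
  then have "sqrt ((x p)\<^sup>2) \<le> sqrt (\<Sum>i<k. (x i)\<^sup>2)" by (rule real_sqrt_le_mono)
  then show ?thesis by (simp add: enorm_def)
qed

lemma N2: "rep n x Z \<Longrightarrow> symm n Z \<Longrightarrow> r < n \<Longrightarrow> c < n \<Longrightarrow> \<bar>Z r c\<bar> \<le> enorm (ntil n) x"
proof -
  assume rp: "rep n x Z" and sy: "symm n Z" and rc: "r < n" "c < n"
  show ?thesis
  proof (cases "c \<le> r")
    case True
    then have "Z r c = x (vech_pos n r c)" using rp rc by (simp add: rep_def)
    then show ?thesis using comp_le_enorm vp_bound True rc by simp
  next
    case False
    then have "Z r c = x (vech_pos n c r)" using rp rc sy by (simp add: rep_def symm_def)
    then show ?thesis using comp_le_enorm vp_bound False rc by simp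
  qed
qed

lemma N3: "rep n x Z \<Longrightarrow> symm n Z \<Longrightarrow> l1 n Z \<le> real (n*n) * enorm (ntil n) x"
proof -
  assume rp: "rep n x Z" and sy: "symm n Z"
  have "l1 n Z = (\<Sum>rc\<in>{..<n} \<times> {..<n}. \<bar>Z (fst rc) (snd rc)\<bar>)" by (simp add: l1_def sum.cartesian_product case_prod_unfold)
  also have "\<dots> \<le> of_nat (card ({..<n} \<times> {..<n})) * enorm (ntil n) x"
    using N2[OF rp sy] by (intro sum_bounded_above) auto
  finally show ?thesis by simp
qed

context smpctx begin

definition Gm :: "'p \<Rightarrow> rmat \<Rightarrow> rmat" where
  "Gm th Z = (\<lambda>r r'. \<Sum>c<n. \<Sum>c'<n. Hq th r c r' c' * Z c c')"

primrec Zs :: "(nat \<Rightarrow> 'p) \<Rightarrow> rmat \<Rightarrow> nat \<Rightarrow> rmat" where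
  "Zs th Z 0 = Z"
| "Zs th Z (Suc t) = Gm (th t) (Zs th Z t)"

lemma Hq_sym: "Hq th r c r' c' = Hq th r' c' r c"
  unfolding Hq_def by (simp add: mult.commute)

lemma Gm_symm: "symm n Z \<Longrightarrow> symm n (Gm th Z)"
  unfolding symm_def
proof (intro allI impI)
  fix r r' assume sy: "\<forall>r c. r < n \<longrightarrow> c < n \<longrightarrow> Z r c = Z c r" and rr: "r < n" "r' < n"
  have "Gm th Z r' r = (\<Sum>c<n. \<Sum>c'<n. Hq th r c' r' c * Z c c')"
    unfolding Gm_def by (simp add: Hq_sym)
  also have "\<dots> = (\<Sum>c'<n. \<Sum>c<n. Hq th r c' r' c * Z c c')" by (rule sum.swap)
  also have "\<dots> = (\<Sum>c'<n. \<Sum>c<n. Hq th r c' r' c * Z c' c)"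
    using sy by (intro sum.cong refl) auto
  also have "\<dots> = Gm th Z r r'" unfolding Gm_def ..
  finally show "Gm th Z r r' = Gm th Z r' r" by simp
qed

lemma Zs_symm: "symm n Z \<Longrightarrow> symm n (Zs th Z t)"
  by (induction t) (auto intro: Gm_symm)

lemma Zs_rep:
  assumes th: "\<forall>s. th s \<in> S" and sy: "symm n Z" and rp: "rep n x Z"
  shows "rep n (xtraj n m N Ms K x (\<lambda>s. phi (th s)) t) (Zs th Z t)"
proof (induction t)
  case 0 then show ?case using rp by simp
next
  case (Suc t)
  have "rep n (mvmul (ntil n) (Cmap n (Fth n m N Ms (phi (th t)) K)) (xtraj n m N Ms K x (\<lambda>s. phi (th s)) t))
     (\<lambda>r r'. \<Sum>c<n. \<Sum>c'<n. Hq (th t) r c r' c' * Zs th Z t c c')"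
    by (rule Cmap_step[OF npos Zs_symm[OF sy] Suc]) (simp add: Hq_int(2)[OF th[rule_format]])
  then show ?case by (simp add: Gm_def)
qed

lemma Zs_lin:
  assumes A: "finite A" and Z: "\<forall>r c. r < n \<longrightarrow> c < n \<longrightarrow> Z r c = (\<Sum>k\<in>A. a k * Y k r c)"
  shows "r < n \<Longrightarrow> c < n \<Longrightarrow> Zs th Z t r c = (\<Sum>k\<in>A. a k * Zs th (Y k) t r c)"
proof (induction t arbitrary: r c)
  case 0 then show ?case using Z by simp
next
  case (Suc t)
  have "Zs th Z (Suc t) r c = (\<Sum>c1<n. \<Sum>c2<n. Hq (th t) r c1 c c2 * (\<Sum>k\<in>A. a k * Zs th (Y k) t c1 c2))"
    using Suc.IH by (simp add: Gm_def)
  also have "\<dots> = (\<Sum>c1<n. \<Sum>c2<n. \<Sum>k\<in>A. a k * (Hq (th t) r c1 c c2 * Zs th (Y k) t c1 c2))"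
    by (simp add: sum_distrib_left algebra_simps)
  also have "\<dots> = (\<Sum>c1<n. \<Sum>k\<in>A. \<Sum>c2<n. a k * (Hq (th t) r c1 c c2 * Zs th (Y k) t c1 c2))"
    by (intro sum.cong refl sum.swap)
  also have "\<dots> = (\<Sum>k\<in>A. \<Sum>c1<n. \<Sum>c2<n. a k * (Hq (th t) r c1 c c2 * Zs th (Y k) t c1 c2))"
    by (rule sum.swap)
  also have "\<dots> = (\<Sum>k\<in>A. a k * Zs th (Y k) (Suc t) r c)"
    by (simp add: Gm_def sum_distrib_left)
  finally show ?case .
qed

end

lemma prod_ins:
  fixes Mf :: "nat \<Rightarrow> 'a measure" and F g :: "_ \<Rightarrow> real"
  assumes pr: "\<And>s. prob_space (Mf s)" and I: "finite I" "t \<notin> I"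
    and F: "integrable (Mf t) F" and g: "integrable (PiM I Mf) g"
    and gm: "g \<in> borel_measurable (PiM (insert t I) Mf)"
    and gi: "\<And>x y. g (x(t := y)) = g x"
  shows "integrable (PiM (insert t I) Mf) (\<lambda>x. F (x t) * g x)"
    and "(\<integral>x. F (x t) * g x \<partial>PiM (insert t I) Mf) = integral\<^sup>L (Mf t) F * integral\<^sup>L (PiM I Mf) g"
proof -
  interpret PS: product_sigma_finite Mf
    unfolding product_sigma_finite_def using prob_space_imp_sigma_finite[OF pr] by blast
  have Fb: "F \<in> borel_measurable (Mf t)" using F by simp
  have gb: "g \<in> borel_measurable (PiM I Mf)" using g by simp
  have Fm: "(\<lambda>x. F (x t)) \<in> borel_measurable (PiM (insert t I) Mf)"
    by (rule measurable_compose[OF measurable_component_singleton[of t "insert t I" Mf] Fb]) simp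
  have m: "(\<lambda>x. F (x t) * g x) \<in> borel_measurable (PiM (insert t I) Mf)"
    using Fm gm by (rule borel_measurable_times)
  have "(\<integral>\<^sup>+x. ennreal (norm (F (x t) * g x)) \<partial>PiM (insert t I) Mf)
      = (\<integral>\<^sup>+x. (\<integral>\<^sup>+y. ennreal (norm (F ((x(t:=y)) t) * g (x(t:=y)))) \<partial>Mf t) \<partial>PiM I Mf)"
    using Fm gm by (intro PS.product_nn_integral_insert I) measurable
  also have "\<dots> = (\<integral>\<^sup>+x. (\<integral>\<^sup>+y. ennreal (norm (F y)) \<partial>Mf t) * ennreal (norm (g x)) \<partial>PiM I Mf)"
  proof (intro nn_integral_cong)
    fix x
    have "(\<integral>\<^sup>+y. ennreal (norm (F ((x(t:=y)) t) * g (x(t:=y)))) \<partial>Mf t) = (\<integral>\<^sup>+y. ennreal (norm (F y)) * ennreal (norm (g x)) \<partial>Mf t)"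
      by (simp add: gi abs_mult ennreal_mult)
    also have "\<dots> = (\<integral>\<^sup>+y. ennreal (norm (F y)) \<partial>Mf t) * ennreal (norm (g x))"
      by (rule nn_integral_multc) (use Fb in measurable)
    finally show "(\<integral>\<^sup>+y. ennreal (norm (F ((x(t:=y)) t) * g (x(t:=y)))) \<partial>Mf t) = (\<integral>\<^sup>+y. ennreal (norm (F y)) \<partial>Mf t) * ennreal (norm (g x))" .
  qed
  also have "\<dots> = (\<integral>\<^sup>+y. ennreal (norm (F y)) \<partial>Mf t) * (\<integral>\<^sup>+x. ennreal (norm (g x)) \<partial>PiM I Mf)"
    using gb by (intro nn_integral_cmult) measurable
  also have "\<dots> < \<infinity>"
    using F g by (simp add: integrable_iff_bounded ennreal_mult_less_top)
  finally show int: "integrable (PiM (insert t I) Mf) (\<lambda>x. F (x t) * g x)"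
    using m by (simp add: integrable_iff_bounded)
  have "(\<integral>x. F (x t) * g x \<partial>PiM (insert t I) Mf)
      = (\<integral>x. (\<integral>y. F ((x(t:=y)) t) * g (x(t:=y)) \<partial>Mf t) \<partial>PiM I Mf)"
    by (rule PS.product_integral_insert[OF I int])
  also have "\<dots> = (\<integral>x. integral\<^sup>L (Mf t) F * g x \<partial>PiM I Mf)"
    by (simp add: gi)
  also have "\<dots> = integral\<^sup>L (Mf t) F * integral\<^sup>L (PiM I Mf) g"
    by simp
  finally show "(\<integral>x. F (x t) * g x \<partial>PiM (insert t I) Mf) = integral\<^sup>L (Mf t) F * integral\<^sup>L (PiM I Mf) g" .
qed

lemma traj_dep: "(\<forall>s<t. vs s = vs' s) \<Longrightarrow> traj n m K u vs t = traj n m K u vs' t"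
  by (induction t) auto

definition outer :: "rvec \<Rightarrow> rmat" where
  "outer u = (\<lambda>r c. u r * u c)"

context smpctx begin

lemma vd_sets: "sets (vdist n m p th) = sets (LebR (n*(n+m)))"
  by (simp add: vdist_def)

lemma comp_meas: "k < n*(n+m) \<Longrightarrow> (\<lambda>v. v k) \<in> borel_measurable (vdist n m p th)"
proof -
  assume k: "k < n*(n+m)"
  have "(\<lambda>v. v k) \<in> borel_measurable (PiM {..<n*(n+m)} (\<lambda>_. lborel))"
    using measurable_component_singleton[of k "{..<n*(n+m)}" "\<lambda>_. lborel"] k by simp
  then have "(\<lambda>v. v k) \<in> borel_measurable (LebR (n*(n+m)))"
    unfolding LebR_def by (rule measurable_completion)
  then show ?thesis using measurable_cong_sets[OF vd_sets refl] by blast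
qed

lemma traj_meas:
  "{..<t} \<subseteq> I \<Longrightarrow> i < n \<Longrightarrow> (\<lambda>vs. traj n m K u vs t i) \<in> borel_measurable (PiM I (\<lambda>s. vdist n m p (th s)))"
proof (induction t arbitrary: i)
  case 0 then show ?case by simp
next
  case (Suc t)
  have tI: "t \<in> I" and sub: "{..<t} \<subseteq> I" using Suc.prems(1) by (simp_all add: lessThan_Suc)
  have cm: "(\<lambda>vs. vs t k) \<in> borel_measurable (PiM I (\<lambda>s. vdist n m p (th s)))" if "k < n*(n+m)" for k
    by (rule measurable_compose[OF measurable_component_singleton[OF tI] comp_meas[OF that]])
  have IH: "(\<lambda>vs. traj n m K u vs t c) \<in> borel_measurable (PiM I (\<lambda>s. vdist n m p (th s)))" if "c < n" for c
    using Suc.IH[OF sub that] .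
  have eq: "(\<lambda>vs. traj n m K u vs (Suc t) i) = (\<lambda>vs. \<Sum>c<n. (vs t (i + n*c) - (\<Sum>j<m. vs t (i + n*(n+j)) * K j c)) * traj n m K u vs t c)"
    by (simp add: cl_step_Lm Lm_def Amat_def Bmat_def)
  show ?case unfolding eq
    using Suc.prems
    by (intro borel_measurable_sum borel_measurable_times borel_measurable_diff borel_measurable_const
        cm IH idxA idxB) auto
qed

end

lemma half_sum: "(\<Sum>i<n. \<Sum>j<n. ((a::nat\<Rightarrow>real) i + a j) / 2) = real n * (\<Sum>i<n. a i)"
proof -
  have "(\<Sum>i<n. \<Sum>j<n. (a i + a j) / 2) = (\<Sum>i<n. \<Sum>j<n. a i / 2) + (\<Sum>i<n. \<Sum>j<n. a j / 2)"
    by (simp add: add_divide_distrib sum.distrib)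
  also have "(\<Sum>i<n. \<Sum>j<n. a i / 2) = real n * (\<Sum>i<n. a i) / 2"
    by (simp add: sum_distrib_left sum_divide_distrib)
  also have "(\<Sum>i<n. \<Sum>j<n. a j / 2) = real n * (\<Sum>i<n. a i) / 2"
    by (simp add: sum_divide_distrib[symmetric])
  finally show ?thesis by simp
qed

context smpctx begin

lemma vd_prob: "th \<in> S \<Longrightarrow> prob_space (vdist n m p th)"
  using dens by blast

lemma moments:
  assumes th: "\<forall>s. th s \<in> S"
  shows "\<forall>i<n. \<forall>j<n. integrable (PiM {..<t} (\<lambda>s. vdist n m p (th s))) (\<lambda>vs. traj n m K u vs t i * traj n m K u vs t j)
     \<and> (\<integral>vs. traj n m K u vs t i * traj n m K u vs t j \<partial>PiM {..<t} (\<lambda>s. vdist n m p (th s))) = Zs th (outer u) t i j"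
proof (induction t)
  case 0
  let ?Mf = "\<lambda>s. vdist n m p (th s)"
  interpret P0: prob_space "PiM {} ?Mf"
    by (rule prob_space_PiM) (use th vd_prob in auto)
  show ?case by (simp add: outer_def P0.prob_space)
next
  case (Suc t)
  let ?Mf = "\<lambda>s. vdist n m p (th s)"
  let ?x = "\<lambda>vs c. traj n m K u vs t c"
  have pr: "\<And>s. prob_space (?Mf s)" using th vd_prob by auto
  have PS: "PiM {..<Suc t} ?Mf = PiM (insert t {..<t}) ?Mf" by (simp add: lessThan_Suc)
  have tm: "integrable (PiM (insert t {..<t}) ?Mf) (\<lambda>vs. (Lm n m K (vs t) i c * Lm n m K (vs t) j c') * (?x vs c * ?x vs c'))
     \<and> (\<integral>vs. (Lm n m K (vs t) i c * Lm n m K (vs t) j c') * (?x vs c * ?x vs c') \<partial>PiM (insert t {..<t}) ?Mf)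
        = Hq (th t) i c j c' * Zs th (outer u) t c c'"
    if ij: "i < n" "j < n" "c < n" "c' < n" for i j c c'
  proof -
    have F: "integrable (?Mf t) (\<lambda>v. Lm n m K v i c * Lm n m K v j c')"
      using Hq_int(1)[OF th[rule_format] ij(1,2,3,4)] .
    have g: "integrable (PiM {..<t} ?Mf) (\<lambda>vs. ?x vs c * ?x vs c')" using Suc.IH ij by auto
    have gm: "(\<lambda>vs. ?x vs c * ?x vs c') \<in> borel_measurable (PiM (insert t {..<t}) ?Mf)"
      using traj_meas[of t "insert t {..<t}" c u th] traj_meas[of t "insert t {..<t}" c' u th] ij
      by (intro borel_measurable_times) auto
    have gi0: "traj n m K u (x(t:=y)) t = traj n m K u x t" for x y by (rule traj_dep) auto
    have gi: "\<And>x y. ?x (x(t:=y)) c * ?x (x(t:=y)) c' = ?x x c * ?x x c'"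
      by (simp add: gi0)
    have r: "integrable (PiM (insert t {..<t}) ?Mf) (\<lambda>vs. (Lm n m K (vs t) i c * Lm n m K (vs t) j c') * (?x vs c * ?x vs c'))"
      by (rule prod_ins(1)[where Mf="?Mf" and I="{..<t}" and t=t, OF pr _ _ F g gm gi]) auto
    have v: "(\<integral>vs. (Lm n m K (vs t) i c * Lm n m K (vs t) j c') * (?x vs c * ?x vs c') \<partial>PiM (insert t {..<t}) ?Mf)
       = Hq (th t) i c j c' * Zs th (outer u) t c c'"
      using prod_ins(2)[where Mf="?Mf" and I="{..<t}" and t=t, OF pr _ _ F g gm gi] Suc.IH ij by (simp add: Hq_def)
    show ?thesis using r v by simp
  qed
  have eq: "(\<lambda>vs. traj n m K u vs (Suc t) i * traj n m K u vs (Suc t) j) =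
     (\<lambda>vs. \<Sum>c<n. \<Sum>c'<n. (Lm n m K (vs t) i c * Lm n m K (vs t) j c') * (?x vs c * ?x vs c'))" for i j
    by (rule ext) (simp add: cl_step_Lm sum_product algebra_simps)
  show ?case
  proof (intro allI impI conjI)
    fix i j assume ij: "i < n" "j < n"
    show "integrable (PiM {..<Suc t} ?Mf) (\<lambda>vs. traj n m K u vs (Suc t) i * traj n m K u vs (Suc t) j)"
      unfolding PS eq using tm ij
      by (intro Bochner_Integration.integrable_sum) auto
    have "(\<integral>vs. traj n m K u vs (Suc t) i * traj n m K u vs (Suc t) j \<partial>PiM {..<Suc t} ?Mf)
        = (\<Sum>c<n. \<Sum>c'<n. Hq (th t) i c j c' * Zs th (outer u) t c c')"
      unfolding PS eq
    proof -
      let ?P = "PiM (insert t {..<t}) ?Mf"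
      let ?f = "\<lambda>c c' vs. (Lm n m K (vs t) i c * Lm n m K (vs t) j c') * (?x vs c * ?x vs c')"
      have "(\<integral>vs. (\<Sum>c<n. \<Sum>c'<n. ?f c c' vs) \<partial>?P) = (\<Sum>c<n. \<integral>vs. (\<Sum>c'<n. ?f c c' vs) \<partial>?P)"
        by (intro Bochner_Integration.integral_sum Bochner_Integration.integrable_sum) (use tm ij in auto)
      also have "\<dots> = (\<Sum>c<n. \<Sum>c'<n. \<integral>vs. ?f c c' vs \<partial>?P)"
        by (intro sum.cong refl Bochner_Integration.integral_sum) (use tm ij in auto)
      also have "\<dots> = (\<Sum>c<n. \<Sum>c'<n. Hq (th t) i c j c' * Zs th (outer u) t c c')"
        by (intro sum.cong refl) (use tm ij in auto)
      finally show "(\<integral>vs. (\<Sum>c<n. \<Sum>c'<n. ?f c c' vs) \<partial>?P) = (\<Sum>c<n. \<Sum>c'<n. Hq (th t) i c j c' * Zs th (outer u) t c c')" .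
    qed
    also have "\<dots> = Zs th (outer u) (Suc t) i j" by (simp add: Gm_def)
    finally show "(\<integral>vs. traj n m K u vs (Suc t) i * traj n m K u vs (Suc t) j \<partial>PiM {..<Suc t} ?Mf) = Zs th (outer u) (Suc t) i j" .
  qed
qed

end

lemma l1_comb:
  assumes A: "finite A" and Z: "\<forall>r c. r < n \<longrightarrow> c < n \<longrightarrow> Z r c = (\<Sum>k\<in>A. a k * Y k r c)"
  shows "l1 n Z \<le> (\<Sum>k\<in>A. \<bar>a k\<bar> * l1 n (Y k))"
proof -
  have "l1 n Z = (\<Sum>r<n. \<Sum>c<n. \<bar>\<Sum>k\<in>A. a k * Y k r c\<bar>)"
    unfolding l1_def using Z by (intro sum.cong refl) auto
  also have "\<dots> \<le> (\<Sum>r<n. \<Sum>c<n. \<Sum>k\<in>A. \<bar>a k\<bar> * \<bar>Y k r c\<bar>)"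
    by (intro sum_mono) (auto intro: order_trans[OF sum_abs] simp: abs_mult)
  also have "\<dots> = (\<Sum>k\<in>A. \<bar>a k\<bar> * l1 n (Y k))"
    unfolding l1_def sum_distrib_left
    by (subst sum.swap) (intro sum.cong refl, subst sum.swap, simp)
  finally show ?thesis .
qed

lemma aux_ineq: "0 \<le> a + b + 2*c \<Longrightarrow> -((a + b)/2) \<le> (c::real)"
  by (simp add: field_simps)

definition vechE :: "nat \<Rightarrow> rmat \<Rightarrow> rvec" where
  "vechE n Z = (\<lambda>p. \<Sum>q<n*n. Ee n p q * Z (q mod n) (q div n))"

lemma rep_vechE: "0 < n \<Longrightarrow> rep n (vechE n Z) Z"
  unfolding rep_def vechE_def by (auto simp: Ee_sum)

lemma symm_outer: "symm n (outer u)"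
  by (simp add: symm_def outer_def mult.commute)

lemma l1_outer: "l1 n (outer u) \<le> real (n*n) * (enorm n u)\<^sup>2"
proof -
  have "l1 n (outer u) = (\<Sum>rc\<in>{..<n} \<times> {..<n}. \<bar>u (fst rc) * u (snd rc)\<bar>)"
    by (simp add: l1_def outer_def sum.cartesian_product case_prod_unfold)
  also have "\<dots> \<le> of_nat (card ({..<n} \<times> {..<n})) * (enorm n u)\<^sup>2"
  proof (intro sum_bounded_above)
    fix rc assume "rc \<in> {..<n} \<times> {..<n}"
    then have "\<bar>u (fst rc)\<bar> \<le> enorm n u" "\<bar>u (snd rc)\<bar> \<le> enorm n u" using comp_le_enorm by auto
    then show "\<bar>u (fst rc) * u (snd rc)\<bar> \<le> (enorm n u)\<^sup>2"
      unfolding abs_mult power2_eq_square by (intro mult_mono) auto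
  qed
  finally show ?thesis by simp
qed

context smpctx begin

lemma ms_int:
  assumes th: "\<forall>s. th s \<in> S"
  shows "(\<integral>\<^sup>+vs. ennreal ((enorm n (traj n m K u vs t))\<^sup>2) \<partial>PiM {..<t} (\<lambda>s. vdist n m p (th s)))
     = ennreal (\<Sum>i<n. Zs th (outer u) t i i)"
proof -
  let ?P = "PiM {..<t} (\<lambda>s. vdist n m p (th s))"
  have sq: "(enorm n x)\<^sup>2 = (\<Sum>i<n. x i * x i)" for x
    by (simp add: enorm_def sum_nonneg power2_eq_square[symmetric])
  have I: "integrable ?P (\<lambda>vs. \<Sum>i<n. traj n m K u vs t i * traj n m K u vs t i)"
    using moments[OF th, of t u] by (intro Bochner_Integration.integrable_sum) auto
  have "(\<integral>\<^sup>+vs. ennreal ((enorm n (traj n m K u vs t))\<^sup>2) \<partial>?P)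
      = (\<integral>\<^sup>+vs. ennreal (\<Sum>i<n. traj n m K u vs t i * traj n m K u vs t i) \<partial>?P)"
    by (simp add: sq)
  also have "\<dots> = ennreal (\<integral>vs. (\<Sum>i<n. traj n m K u vs t i * traj n m K u vs t i) \<partial>?P)"
    by (rule nn_integral_eq_integral[OF I]) (simp add: sum_nonneg)
  also have "(\<integral>vs. (\<Sum>i<n. traj n m K u vs t i * traj n m K u vs t i) \<partial>?P) = (\<Sum>i<n. Zs th (outer u) t i i)"
    using moments[OF th, of t u]
    by (subst Bochner_Integration.integral_sum) (auto intro!: sum.cong)
  finally show ?thesis .
qed

lemma l1_bound:
  assumes th: "\<forall>s. th s \<in> S"
  shows "l1 n (Zs th (outer u) t) \<le> real n * (\<Sum>i<n. Zs th (outer u) t i i)"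
proof -
  let ?P = "PiM {..<t} (\<lambda>s. vdist n m p (th s))"
  let ?Z = "Zs th (outer u) t"
  let ?x = "\<lambda>vs i. traj n m K u vs t i"
  have b: "\<bar>?Z i j\<bar> \<le> (?Z i i + ?Z j j) / 2" if ij: "i < n" "j < n" for i j
  proof -
    have mi: "integrable ?P (\<lambda>vs. ?x vs i * ?x vs j)" "integrable ?P (\<lambda>vs. ?x vs i * ?x vs i)"
      "integrable ?P (\<lambda>vs. ?x vs j * ?x vs j)"
      and vi: "(\<integral>vs. ?x vs i * ?x vs j \<partial>?P) = ?Z i j" "(\<integral>vs. ?x vs i * ?x vs i \<partial>?P) = ?Z i i"
        "(\<integral>vs. ?x vs j * ?x vs j \<partial>?P) = ?Z j j"
      using moments[OF th, of t u] ij by auto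
    have ih: "integrable ?P (\<lambda>vs. (?x vs i * ?x vs i + ?x vs j * ?x vs j) / 2)"
      using mi by (intro Bochner_Integration.integrable_divide_zero Bochner_Integration.integrable_add) auto
    have ihm: "integrable ?P (\<lambda>vs. - ((?x vs i * ?x vs i + ?x vs j * ?x vs j) / 2))"
      using ih by (rule Bochner_Integration.integrable_minus)
    have hv: "(\<integral>vs. (?x vs i * ?x vs i + ?x vs j * ?x vs j) / 2 \<partial>?P) = (?Z i i + ?Z j j) / 2"
      using mi vi by (simp add: Bochner_Integration.integral_add)
    have up: "?Z i j \<le> (?Z i i + ?Z j j) / 2"
    proof -
      have "(\<integral>vs. ?x vs i * ?x vs j \<partial>?P) \<le> (\<integral>vs. (?x vs i * ?x vs i + ?x vs j * ?x vs j) / 2 \<partial>?P)"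
      proof (rule integral_mono[OF mi(1) ih])
        fix vs
        have "0 \<le> (?x vs i - ?x vs j)\<^sup>2" by simp
        then show "?x vs i * ?x vs j \<le> (?x vs i * ?x vs i + ?x vs j * ?x vs j) / 2"
          by (simp add: power2_eq_square algebra_simps)
      qed
      then show ?thesis using vi hv by simp
    qed
    have lo: "- ((?Z i i + ?Z j j) / 2) \<le> ?Z i j"
    proof -
      have "(\<integral>vs. - ((?x vs i * ?x vs i + ?x vs j * ?x vs j) / 2) \<partial>?P) \<le> (\<integral>vs. ?x vs i * ?x vs j \<partial>?P)"
      proof (rule integral_mono[OF ihm mi(1)])
        fix vs
        have "0 \<le> (?x vs i + ?x vs j)\<^sup>2" by simp
        then have "0 \<le> ?x vs i * ?x vs i + ?x vs j * ?x vs j + 2 * (?x vs i * ?x vs j)"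
          by (simp add: power2_eq_square algebra_simps)
        then show "- ((?x vs i * ?x vs i + ?x vs j * ?x vs j) / 2) \<le> ?x vs i * ?x vs j"
          by (rule aux_ineq)
      qed
      then show ?thesis using vi hv by simp
    qed
    show ?thesis using up lo by linarith
  qed
  have "l1 n ?Z \<le> (\<Sum>i<n. \<Sum>j<n. (?Z i i + ?Z j j) / 2)"
    unfolding l1_def using b by (intro sum_mono) auto
  also have "\<dots> = real n * (\<Sum>i<n. ?Z i i)" by (rule half_sum)
  finally show ?thesis .
qed

end

definition eb :: "nat \<Rightarrow> rvec" where
  "eb i = (\<lambda>r. if r = i then 1 else 0)"

lemma enorm_le_sumabs: "enorm k x \<le> (\<Sum>i<k. \<bar>x i\<bar>)"
  using L2_set_le_sum_abs[of x "{..<k}"] by (simp add: enorm_def L2_set_def)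

lemma sum_ev_abs: "(\<Sum>r<n. \<bar>eb i r\<bar>) \<le> 1"
  by (simp add: eb_def sum.If_cases)

lemma enorm_ev: "enorm n (eb i) \<le> 2"
  using enorm_le_sumabs[of n "eb i"] sum_ev_abs[where n=n and i=i] by simp

lemma enorm_ev2: "enorm n (\<lambda>r. eb i r + eb j r) \<le> 2"
proof -
  have "enorm n (\<lambda>r. eb i r + eb j r) \<le> (\<Sum>r<n. \<bar>eb i r + eb j r\<bar>)" by (rule enorm_le_sumabs)
  also have "\<dots> \<le> (\<Sum>r<n. \<bar>eb i r\<bar> + \<bar>eb j r\<bar>)" by (intro sum_mono abs_triangle_ineq)
  also have "\<dots> \<le> 2" using sum_ev_abs[where n=n and i=i] sum_ev_abs[where n=n and i=j] by (simp add: sum.distrib)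
  finally show ?thesis .
qed

lemma decomp:
  assumes sy: "symm n Y" and rc: "r < n" "c < n"
  shows "Y r c = (\<Sum>k\<in>{..<n} \<times> {..<n}. (Y (fst k) (snd k) / 2) *
      (outer (\<lambda>x. eb (fst k) x + eb (snd k) x) r c - outer (eb (fst k)) r c - outer (eb (snd k)) r c))"
proof -
  have e: "outer (\<lambda>x. eb i x + eb j x) r c - outer (eb i) r c - outer (eb j) r c = eb i r * eb j c + eb j r * eb i c" for i j
    by (simp add: outer_def algebra_simps)
  have "(\<Sum>k\<in>{..<n} \<times> {..<n}. (Y (fst k) (snd k) / 2) *
      (outer (\<lambda>x. eb (fst k) x + eb (snd k) x) r c - outer (eb (fst k)) r c - outer (eb (snd k)) r c))
    = (\<Sum>i<n. \<Sum>j<n. (Y i j / 2) * (eb i r * eb j c + eb j r * eb i c))"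
    by (simp add: sum.cartesian_product case_prod_unfold e)
  also have "\<dots> = (\<Sum>i<n. \<Sum>j<n. (Y i j / 2) * (eb i r * eb j c)) + (\<Sum>i<n. \<Sum>j<n. (Y i j / 2) * (eb j r * eb i c))"
    by (simp add: distrib_left sum.distrib)
  also have "(\<Sum>i<n. \<Sum>j<n. (Y i j / 2) * (eb i r * eb j c)) = (\<Sum>i<n. (if i = r then 1 else 0) * (\<Sum>j<n. (if j = c then 1 else 0) * (Y i j / 2)))"
  proof -
    have pw: "\<And>i j. (Y i j / 2) * (eb i r * eb j c) = (if i = r then 1 else 0) * ((if j = c then 1 else 0) * (Y i j / 2))"
      by (simp add: eb_def)
    show ?thesis by (simp only: pw sum_distrib_left)
  qed
  also have "\<dots> = Y r c / 2" using rc by (simp only: sum_ind[OF finite_lessThan] lessThan_iff)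
  also have "(\<Sum>i<n. \<Sum>j<n. (Y i j / 2) * (eb j r * eb i c)) = (\<Sum>i<n. (if i = c then 1 else 0) * (\<Sum>j<n. (if j = r then 1 else 0) * (Y i j / 2)))"
  proof -
    have pw: "\<And>i j. (Y i j / 2) * (eb j r * eb i c) = (if i = c then 1 else 0) * ((if j = r then 1 else 0) * (Y i j / 2))"
      by (simp add: eb_def)
    show ?thesis by (simp only: pw sum_distrib_left)
  qed
  also have "\<dots> = Y c r / 2" using rc by (simp only: sum_ind[OF finite_lessThan] lessThan_iff)
  finally show ?thesis using sy rc by (simp add: symm_def)
qed

lemma beta_sq: "0 < (\<beta>::real) \<Longrightarrow> \<beta> < 1 \<Longrightarrow> 0 < \<beta>\<^sup>2 \<and> \<beta>\<^sup>2 < 1"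
  by (simp add: abs_square_less_1)

theorem theorem3:
  fixes n m N :: nat
    and S :: "(real ^ 'd) set"
    and p :: "real ^ 'd \<Rightarrow> (nat \<Rightarrow> real) \<Rightarrow> real"
    and phi :: "real ^ 'd \<Rightarrow> nat \<Rightarrow> real"
    and Ms :: "nat \<Rightarrow> nat \<Rightarrow> nat \<Rightarrow> real"
    and K :: "nat \<Rightarrow> nat \<Rightarrow> real"
    and ti :: bool
    and \<beta> :: real
  assumes "0 < n" "0 < m" "0 < N"
    and dens: "\<forall>th\<in>S. (\<forall>v. 0 \<le> p th v) \<and> p th \<in> borel_measurable (LebR (n * (n + m)))
                  \<and> prob_space (vdist n m p th)"
    and smp: "is_SMP n m S p N Ms phi"
    and "0 < \<beta>" "\<beta> < 1"
  shows "ms_stable_rate n m K p (param_seqs ti S) \<beta> \<longleftrightarrow>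
         exp_stable_rate n m N Ms K (param_seqs ti (phi ` S)) (\<beta>\<^sup>2)"
proof -
  note npos = assms(1) and bpos = assms(6) and blt1 = assms(7)
  interpret smpctx n m N S p phi Ms K
    using assms(1,2) dens smp by unfold_locales auto
  have seqS: "\<And>th. th \<in> param_seqs ti S \<Longrightarrow> \<forall>s. th s \<in> S"
    by (auto simp: param_seqs_def split: if_splits)
  have down: "\<And>th. th \<in> param_seqs ti S \<Longrightarrow> (\<lambda>s. phi (th s)) \<in> param_seqs ti (phi ` S)"
    by (auto simp: param_seqs_def split: if_splits)
  have lift: "\<exists>th\<in>param_seqs ti S. ths = (\<lambda>s. phi (th s))" if h: "ths \<in> param_seqs ti (phi ` S)" for ths
  proof (cases ti)
    case True
    then obtain c where c: "c \<in> phi ` S" "\<forall>t. ths t = c" using h by (auto simp: param_seqs_def)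
    then obtain \<theta> where th: "\<theta> \<in> S" "c = phi \<theta>" by auto
    show ?thesis using True c th by (intro bexI[of _ "\<lambda>_. \<theta>"]) (auto simp: param_seqs_def)
  next
    case False
    then have "\<forall>t. \<exists>\<theta>. \<theta> \<in> S \<and> ths t = phi \<theta>" using h by (auto simp: param_seqs_def)
    then obtain th where th: "\<forall>t. th t \<in> S \<and> ths t = phi (th t)" by metis
    show ?thesis using False th by (intro bexI[of _ th]) (auto simp: param_seqs_def)
  qed
  have b2: "0 < \<beta>\<^sup>2" "\<beta>\<^sup>2 < 1" using beta_sq[OF bpos blt1] by auto
  show ?thesis
  proof
    assume "ms_stable_rate n m K p (param_seqs ti S) \<beta>"
    then obtain \<alpha> where \<alpha>: "\<alpha> > 0" and bd: "\<And>z th t. th \<in> param_seqs ti S \<Longrightarrow>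
        (\<integral>\<^sup>+ vs. ennreal ((enorm n (traj n m K z vs t))\<^sup>2) \<partial>(PiM {..<t} (\<lambda>s. vdist n m p (th s))))
        \<le> ennreal ((\<alpha> * enorm n z * \<beta> ^ t)\<^sup>2)"
      unfolding ms_stable_rate_def by blast
    define B where "B t = real n * (4 * \<alpha>\<^sup>2 * (\<beta>\<^sup>2) ^ t)" for t
    have l1u: "l1 n (Zs th (outer u) t) \<le> B t" if th: "th \<in> param_seqs ti S" and u: "enorm n u \<le> 2" for th u t
    proof -
      have "ennreal (\<Sum>i<n. Zs th (outer u) t i i) \<le> ennreal ((\<alpha> * enorm n u * \<beta> ^ t)\<^sup>2)"
        using bd[OF th, where z=u and t=t] ms_int[OF seqS[OF th]] by simp
      then have tr: "(\<Sum>i<n. Zs th (outer u) t i i) \<le> (\<alpha> * enorm n u * \<beta> ^ t)\<^sup>2"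
        by (simp add: ennreal_le_iff)
      have "(\<alpha> * enorm n u * \<beta> ^ t)\<^sup>2 = \<alpha>\<^sup>2 * (enorm n u)\<^sup>2 * (\<beta>\<^sup>2) ^ t"
        by (simp add: power_mult_distrib power_mult[symmetric] mult.commute)
      also have "\<dots> \<le> \<alpha>\<^sup>2 * 4 * (\<beta>\<^sup>2) ^ t"
      proof -
        have "(enorm n u)\<^sup>2 \<le> 2\<^sup>2" using u by (intro power_mono) (auto simp: enorm_def sum_nonneg)
        then show ?thesis by (intro mult_right_mono mult_left_mono) auto
      qed
      finally have "(\<Sum>i<n. Zs th (outer u) t i i) \<le> 4 * \<alpha>\<^sup>2 * (\<beta>\<^sup>2) ^ t" using tr by simp
      then have "real n * (\<Sum>i<n. Zs th (outer u) t i i) \<le> B t"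
        unfolding B_def by (intro mult_left_mono) auto
      then show ?thesis using l1_bound[OF seqS[OF th], where u=u and t=t] by linarith
    qed
    show "exp_stable_rate n m N Ms K (param_seqs ti (phi ` S)) (\<beta>\<^sup>2)"
      unfolding exp_stable_rate_def
    proof (intro conjI b2 exI[of _ "6 * real n ^ 3 * \<alpha>\<^sup>2 + 1"] allI impI)
      show "0 < 6 * real n ^ 3 * \<alpha>\<^sup>2 + 1" by (simp add: add_nonneg_pos)
      fix x0 :: rvec and ths :: "nat \<Rightarrow> rvec" and t :: nat assume hs: "ths \<in> param_seqs ti (phi ` S)"
      obtain th where th: "th \<in> param_seqs ti S" and ths: "ths = (\<lambda>s. phi (th s))" using lift[OF hs] by blast
      define Y where "Y = (\<lambda>r c. x0 (vech_pos n (max r c) (min r c)))"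
      have syY: "symm n Y" by (simp add: symm_def Y_def max.commute min.commute)
      have rpY: "rep n x0 Y" by (simp add: rep_def Y_def max_def min_def)
      have rp: "rep n (xtraj n m N Ms K x0 ths t) (Zs th Y t)"
        unfolding ths by (rule Zs_rep[OF seqS[OF th] syY rpY])
      define W where "W k = outer (\<lambda>x. eb (fst k) x + eb (snd k) x)" for k :: "nat \<times> nat"
      define E where "E i = outer (eb i)" for i
      define D where "D k = (\<lambda>r c. W k r c - E (fst k) r c - E (snd k) r c)" for k :: "nat \<times> nat"
      have Ylin: "\<forall>r c. r < n \<longrightarrow> c < n \<longrightarrow> Y r c = (\<Sum>k\<in>{..<n} \<times> {..<n}. (Y (fst k) (snd k) / 2) * D k r c)"
        using decomp[OF syY] by (simp add: D_def W_def E_def)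
      have l1D: "l1 n (Zs th (D k) t) \<le> 3 * B t" for k
      proof -
        define a where "a l = (if l = (0::nat) then 1 else (-1::real))" for l
        define Yk where "Yk l = (if l = (0::nat) then W k else if l = 1 then E (fst k) else E (snd k))" for l
        have Dlin: "\<forall>r c. r < n \<longrightarrow> c < n \<longrightarrow> D k r c = (\<Sum>l\<in>{0,1,2}. a l * Yk l r c)"
          by (simp add: D_def a_def Yk_def)
        have "l1 n (Zs th (D k) t) \<le> (\<Sum>l\<in>{0,1,2}. \<bar>a l\<bar> * l1 n (Zs th (Yk l) t))"
          by (rule l1_comb) (use Zs_lin[OF _ Dlin] in auto)
        also have "\<dots> = l1 n (Zs th (W k) t) + l1 n (Zs th (E (fst k)) t) + l1 n (Zs th (E (snd k)) t)"
          by (simp add: a_def Yk_def)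
        also have "\<dots> \<le> B t + B t + B t"
          unfolding W_def E_def using enorm_ev enorm_ev2
          by (intro add_mono l1u[OF th]) auto
        finally show ?thesis by simp
      qed
      have "enorm (ntil n) (xtraj n m N Ms K x0 ths t) \<le> l1 n (Zs th Y t)" by (rule N1[OF rp])
      also have "\<dots> \<le> (\<Sum>k\<in>{..<n} \<times> {..<n}. \<bar>Y (fst k) (snd k) / 2\<bar> * l1 n (Zs th (D k) t))"
        by (rule l1_comb) (use Zs_lin[OF _ Ylin] in auto)
      also have "\<dots> \<le> (\<Sum>k\<in>{..<n} \<times> {..<n}. \<bar>Y (fst k) (snd k) / 2\<bar> * (3 * B t))"
        by (intro sum_mono mult_left_mono l1D) auto
      also have "\<dots> = 3 * B t / 2 * l1 n Y"
        by (simp add: l1_def sum.cartesian_product case_prod_unfold sum_distrib_left sum_distrib_right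
            sum_divide_distrib[symmetric] algebra_simps)
      also have "\<dots> \<le> 3 * B t / 2 * (real (n*n) * enorm (ntil n) x0)"
        by (intro mult_left_mono N3[OF rpY syY]) (auto simp: B_def)
      also have "\<dots> = 6 * real n ^ 3 * \<alpha>\<^sup>2 * enorm (ntil n) x0 * (\<beta>\<^sup>2) ^ t"
        by (simp add: B_def power3_eq_cube algebra_simps)
      also have "\<dots> \<le> (6 * real n ^ 3 * \<alpha>\<^sup>2 + 1) * enorm (ntil n) x0 * (\<beta>\<^sup>2) ^ t"
        by (intro mult_right_mono) (auto simp: enorm_def sum_nonneg)
      finally show "enorm (ntil n) (xtraj n m N Ms K x0 ths t) \<le> (6 * real n ^ 3 * \<alpha>\<^sup>2 + 1) * enorm (ntil n) x0 * (\<beta>\<^sup>2) ^ t" .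
    qed
  next
    assume "exp_stable_rate n m N Ms K (param_seqs ti (phi ` S)) (\<beta>\<^sup>2)"
    then obtain ak where ak: "ak > 0" and bd: "\<And>z ths t. ths \<in> param_seqs ti (phi ` S) \<Longrightarrow>
        enorm (ntil n) (xtraj n m N Ms K z ths t) \<le> ak * enorm (ntil n) z * (\<beta>\<^sup>2) ^ t"
      unfolding exp_stable_rate_def by blast
    show "ms_stable_rate n m K p (param_seqs ti S) \<beta>"
      unfolding ms_stable_rate_def
    proof (intro conjI bpos blt1 exI[of _ "sqrt (real n ^ 3 * ak)"] allI impI)
      show "0 < sqrt (real n ^ 3 * ak)" using npos ak by simp
      fix x0 :: rvec and th :: "nat \<Rightarrow> real ^ 'd" and t :: nat assume th: "th \<in> param_seqs ti S"
      let ?Z = "Zs th (outer x0) t"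
      have rp: "rep n (xtraj n m N Ms K (vechE n (outer x0)) (\<lambda>s. phi (th s)) t) ?Z"
        by (rule Zs_rep[OF seqS[OF th] symm_outer rep_vechE[OF npos]])
      have sy: "symm n ?Z" by (rule Zs_symm[OF symm_outer])
      have "(\<Sum>i<n. ?Z i i) \<le> (\<Sum>i<n. \<bar>?Z i i\<bar>)" by (intro sum_mono) auto
      also have "\<dots> \<le> of_nat (card {..<n::nat}) * enorm (ntil n) (xtraj n m N Ms K (vechE n (outer x0)) (\<lambda>s. phi (th s)) t)"
        by (intro sum_bounded_above N2[OF rp sy]) auto
      also have "\<dots> \<le> real n * (ak * enorm (ntil n) (vechE n (outer x0)) * (\<beta>\<^sup>2) ^ t)"
        using bd[OF down[OF th], where z="vechE n (outer x0)" and t=t] by (simp add: mult_left_mono)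
      also have "\<dots> \<le> real n * (ak * (real (n*n) * (enorm n x0)\<^sup>2) * (\<beta>\<^sup>2) ^ t)"
      proof -
        have "enorm (ntil n) (vechE n (outer x0)) \<le> real (n*n) * (enorm n x0)\<^sup>2"
          using N1[OF rep_vechE[OF npos]] l1_outer order_trans by blast
        then show ?thesis using ak b2 by (intro mult_left_mono mult_right_mono) auto
      qed
      also have "\<dots> = (sqrt (real n ^ 3 * ak) * enorm n x0 * \<beta> ^ t)\<^sup>2"
        using ak by (simp add: power_mult_distrib power_mult[symmetric] power3_eq_cube algebra_simps)
      finally have tr: "(\<Sum>i<n. ?Z i i) \<le> (sqrt (real n ^ 3 * ak) * enorm n x0 * \<beta> ^ t)\<^sup>2" .
      show "(\<integral>\<^sup>+ vs. ennreal ((enorm n (traj n m K x0 vs t))\<^sup>2) \<partial>(PiM {..<t} (\<lambda>s. vdist n m p (th s))))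
        \<le> ennreal ((sqrt (real n ^ 3 * ak) * enorm n x0 * \<beta> ^ t)\<^sup>2)"
        unfolding ms_int[OF seqS[OF th]] using tr by (rule ennreal_leI)
    qed
  qed
qed

end
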